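(* Let $\varphi$ be a profile over a finite set $N$ that is qualifying consecutive (QC) with respect to a linear order $\rhd$ of $N$. Then the individuals in $f^{\mathrm{CSR}}(\varphi,N)$ are consecutive in $\rhd$ (i.e., $f^{\mathrm{CSR}}(\varphi,N)$ is an interval of $\rhd$, possibly empty).
   Context: A profile over a finite set $N$ of individuals is a map $\varphi:N\times N\to\{0,1\}$; $\varphi(a,a')=1$ means $a$ qualifies $a'$. For a linear order $\rhd=(a_1,\dots,a_n)$ of $N$, $\varphi$ is QC with respect to $\rhd$ if for every $a\in N$ the set $\{a_x:\varphi(a,a_x)=1\}$ is a set of consecutive elements of $\rhd$ (all 1s in the vector $(\varphi(a,a_1),\dots,\varphi(a,a_n))$ are consecutive). Consensus-start-respecting rule: for $T\subseteq N$, let $K_0(\varphi,T)=\{a\in T:\varphi(a',a)=1\text{ for all }a'\in T\}$ and for $\ell\ge1$, $K_\ell(\varphi,T)=K_{\ell-1}(\varphi,T)\cup\{a\in T:\exists a'\in K_{\ell-1}(\varphi,T),\ \varphi(a',a)=1\}$; $f^{\mathrm{CSR}}(\varphi,T)$ is the limit (stable value) of this sequence. *)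

theory Defs
  imports Main
begin

(* A profile over N: phi a a' = True means a qualifies a'.
   A linear order of N is represented as a list ord enumerating N without repetition:
   ord = [a_1, ..., a_n]. *)

definition linear_order_of :: "'a list \<Rightarrow> 'a set \<Rightarrow> bool" where
  "linear_order_of ord N \<longleftrightarrow> distinct ord \<and> set ord = N"

definition consecutive_in :: "'a list \<Rightarrow> 'a set \<Rightarrow> bool" where
  "consecutive_in ord S \<longleftrightarrow>
     (\<forall>i j k. i \<le> j \<longrightarrow> j \<le> k \<longrightarrow> k < length ord \<longrightarrow>
        ord ! i \<in> S \<longrightarrow> ord ! k \<in> S \<longrightarrow> ord ! j \<in> S)"

definition QC :: "('a \<Rightarrow> 'a \<Rightarrow> bool) \<Rightarrow> 'a set \<Rightarrow> 'a list \<Rightarrow> bool" where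
  "QC phi N ord \<longleftrightarrow> (\<forall>a\<in>N. consecutive_in ord {x. phi a x})"

fun K :: "('a \<Rightarrow> 'a \<Rightarrow> bool) \<Rightarrow> 'a set \<Rightarrow> nat \<Rightarrow> 'a set" where
  "K phi T 0 = {a\<in>T. \<forall>a'\<in>T. phi a' a}"
| "K phi T (Suc l) = K phi T l \<union> {a\<in>T. \<exists>a'\<in>K phi T l. phi a' a}"

definition f_CSR :: "('a \<Rightarrow> 'a \<Rightarrow> bool) \<Rightarrow> 'a set \<Rightarrow> 'a set" where
  "f_CSR phi T = (\<Union>l. K phi T l)"

end

theory Submission
  imports Defs
begin

lemma K_sub: "K phi T l \<subseteq> T"
  by (induction l) auto

lemma K_witness: "x \<in> K phi T l \<Longrightarrow> \<exists>a'\<in>T. phi a' x \<and> a' \<in> f_CSR phi T"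
proof (induction l arbitrary: x)
  case 0
  then show ?case unfolding f_CSR_def by fastforce
next
  case (Suc l)
  then show ?case unfolding f_CSR_def using K_sub by fastforce
qed

theorem lemma2:
  fixes phi :: "'a \<Rightarrow> 'a \<Rightarrow> bool" and N :: "'a set" and ord :: "'a list"
  assumes "finite N"
    and "linear_order_of ord N"
    and "QC phi N ord"
  shows "consecutive_in ord (f_CSR phi N)"
  unfolding consecutive_in_def
proof (intro allI impI)
  fix i j k
  assume ij: "i \<le> j" and jk: "j \<le> k" and kl: "k < length ord"
    and ii: "ord ! i \<in> f_CSR phi N" and kk: "ord ! k \<in> f_CSR phi N"
  have setN: "set ord = N" using assms(2) unfolding linear_order_of_def by simp
  from ii obtain l0 where "ord ! i \<in> K phi N l0" unfolding f_CSR_def by auto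
  have K0ne: "K phi N 0 \<noteq> {}"
  proof
    assume e: "K phi N 0 = {}"
    have "K phi N l = {}" for l by (induction l) (use e in auto)
    then show False using ii unfolding f_CSR_def by auto
  qed
  then obtain c where c: "c \<in> K phi N 0" by auto
  then have "c \<in> N" by simp
  then obtain m where m: "m < length ord" "ord ! m = c" using setN
    by (metis in_set_conv_nth)
  have key: "ord ! q \<in> f_CSR phi N"
    if p: "p < length ord" "ord ! p \<in> f_CSR phi N"
      and q: "(p \<le> q \<and> q \<le> m) \<or> (m \<le> q \<and> q \<le> p)" for p q
  proof -
    from p obtain l where "ord ! p \<in> K phi N l" unfolding f_CSR_def by auto
    from K_witness[OF this] obtain a' where a': "a' \<in> N" "phi a' (ord ! p)" "a' \<in> f_CSR phi N"
      by blast
    have "phi a' c" using c a' by simp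
    have cons: "consecutive_in ord {x. phi a' x}" using assms(3) a' unfolding QC_def by auto
    have qlen: "q < length ord" using q p m by auto
    have C: "\<And>i j k. i \<le> j \<Longrightarrow> j \<le> k \<Longrightarrow> k < length ord \<Longrightarrow>
        phi a' (ord ! i) \<Longrightarrow> phi a' (ord ! k) \<Longrightarrow> phi a' (ord ! j)"
      using cons unfolding consecutive_in_def by blast
    have pm: "phi a' (ord ! m)" using \<open>phi a' c\<close> m by simp
    have "phi a' (ord ! q)"
    proof (cases "p \<le> q \<and> q \<le> m")
      case True
      then show ?thesis using C[of p q m] m(1) a'(2) pm by blast
    next
      case False
      then have "m \<le> q \<and> q \<le> p" using q by blast
      then show ?thesis using C[of m q p] p(1) a'(2) pm by blast
    qed
    moreover have "ord ! q \<in> N" using qlen setN by auto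
    moreover from a'(3) obtain l' where "a' \<in> K phi N l'" unfolding f_CSR_def by auto
    ultimately have "ord ! q \<in> K phi N (Suc l')" by auto
    then show ?thesis unfolding f_CSR_def by (rule UN_I[rotated]) simp
  qed
  show "ord ! j \<in> f_CSR phi N"
  proof (cases "j \<le> m")
    case True
    show ?thesis
    proof (cases "i \<le> m")
      case True
      then show ?thesis using key[of i j] ij \<open>j \<le> m\<close> ii jk kl by auto
    next
      case False
      then show ?thesis using ij \<open>j \<le> m\<close> by auto
    qed
  next
    case False
    then show ?thesis using key[of k j] jk ii kk kl by auto
  qed
qed

end
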